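(* Assume there exists $C_1>0$ such that $E\{(v^T\mathbf Z)^4\}\leq C_1[E\{(v^T\mathbf Z)^2\}]^2$ for all $v\in\mathbb R^p$, where $\mathbf Z=(Z(t_0),\dots,Z(t_{p-1}))^T$. Let $\widehat G_\phi=\big(\frac1n\sum_{i=1}^n\tilde y_{i,\lambda}\tilde y_{i,\lambda'}\big)_{\lambda,\lambda'\in\Lambda_D}$ and $G_\phi=E[\widehat G_\phi]$. Then \[ E\big[\|\widehat G_\phi-G_\phi\|_F^2\big]\leq\frac{\max(C_1+3,6)}{n}\Big(\sum_{\lambda\in\Lambda_D}(\sigma_\lambda^2+s_\lambda^2)\Big)^2, \] where $\|\cdot\|_F$ is the Frobenius norm.
   Context: Model: $Z$ is a centered process on $[0,1]$ with continuous paths, covariance kernel $K(s,t)=E[Z(s)Z(t)]$; $Z_1,\dots,Z_n$ i.i.d. copies of $Z$; $p\ge2$, $t_h=h/(p-1)$, $h=0,\dots,p-1$; observations $Y_i(t_h)=Z_i(t_h)+\varepsilon_{i,h}$ with $\varepsilon_{i,h}$ i.i.d. $\mathcal N(0,\sigma^2)$ independent of the $Z_i$. $(\phi_\lambda)_{\lambda\in\Lambda_D}$ is a family of real functions on $[0,1]$ indexed by a finite set $\Lambda_D$; $\tilde y_{i,\lambda}=\frac1p\sum_{h=0}^{p-1}Y_i(t_h)\phi_\lambda(t_h)$; $\sigma_\lambda^2=\frac{\sigma^2}{p^2}\sum_{h=0}^{p-1}\phi_\lambda^2(t_h)$; $s_\lambda^2=\frac1{p^2}\sum_{h,h'=0}^{p-1}K(t_h,t_{h'})\phi_\lambda(t_h)\phi_\lambda(t_{h'})$.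 *)

theory Defs
  imports "HOL-Probability.Probability"
begin

definition grid :: "nat \<Rightarrow> nat \<Rightarrow> real" where
  "grid p h = real h / real (p - 1)"

definition obsY :: "nat \<Rightarrow> (nat \<Rightarrow> 'w \<Rightarrow> real \<Rightarrow> real) \<Rightarrow> (nat \<Rightarrow> nat \<Rightarrow> 'w \<Rightarrow> real)
    \<Rightarrow> nat \<Rightarrow> nat \<Rightarrow> 'w \<Rightarrow> real" where
  "obsY p Z eps i h \<omega> = Z i \<omega> (grid p h) + eps i h \<omega>"

definition ytilde :: "nat \<Rightarrow> (nat \<Rightarrow> 'w \<Rightarrow> real \<Rightarrow> real) \<Rightarrow> (nat \<Rightarrow> nat \<Rightarrow> 'w \<Rightarrow> real)
    \<Rightarrow> ('l \<Rightarrow> real \<Rightarrow> real) \<Rightarrow> nat \<Rightarrow> 'l \<Rightarrow> 'w \<Rightarrow> real" where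
  "ytilde p Z eps \<phi> i l \<omega> = (1 / real p) * (\<Sum>h<p. obsY p Z eps i h \<omega> * \<phi> l (grid p h))"

definition Ghat :: "nat \<Rightarrow> nat \<Rightarrow> (nat \<Rightarrow> 'w \<Rightarrow> real \<Rightarrow> real) \<Rightarrow> (nat \<Rightarrow> nat \<Rightarrow> 'w \<Rightarrow> real)
    \<Rightarrow> ('l \<Rightarrow> real \<Rightarrow> real) \<Rightarrow> 'l \<Rightarrow> 'l \<Rightarrow> 'w \<Rightarrow> real" where
  "Ghat n p Z eps \<phi> l l' \<omega> =
     (1 / real n) * (\<Sum>i=1..n. ytilde p Z eps \<phi> i l \<omega> * ytilde p Z eps \<phi> i l' \<omega>)"

definition covK :: "'w measure \<Rightarrow> ('w \<Rightarrow> real \<Rightarrow> real) \<Rightarrow> real \<Rightarrow> real \<Rightarrow> real" where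
  "covK M Z0 s t = (\<integral>\<omega>. Z0 \<omega> s * Z0 \<omega> t \<partial>M)"

definition sigma2 :: "real \<Rightarrow> nat \<Rightarrow> ('l \<Rightarrow> real \<Rightarrow> real) \<Rightarrow> 'l \<Rightarrow> real" where
  "sigma2 \<sigma> p \<phi> l = \<sigma>\<^sup>2 / (real p)\<^sup>2 * (\<Sum>h<p. (\<phi> l (grid p h))\<^sup>2)"

definition s2 :: "'w measure \<Rightarrow> ('w \<Rightarrow> real \<Rightarrow> real) \<Rightarrow> nat \<Rightarrow> ('l \<Rightarrow> real \<Rightarrow> real) \<Rightarrow> 'l \<Rightarrow> real" where
  "s2 M Z0 p \<phi> l = 1 / (real p)\<^sup>2 *
     (\<Sum>h<p. \<Sum>h'<p. covK M Z0 (grid p h) (grid p h') * \<phi> l (grid p h) * \<phi> l (grid p h'))"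

end

theory Submission
  imports Defs
begin

lemma gauss_coord:
  fixes \<sigma> :: real and p :: nat
  assumes sig: "\<sigma> > 0"
  defines "Gm \<equiv> PiM {..<p} (\<lambda>_. density lborel (normal_density 0 \<sigma>))"
  shows "prob_space Gm"
    and "\<And>h. h < p \<Longrightarrow> distributed Gm lborel (\<lambda>e. e h) (normal_density 0 \<sigma>)"
    and "p > 0 \<Longrightarrow> prob_space.indep_vars Gm (\<lambda>_. borel) (\<lambda>h e. e h) {..<p}"
proof -
  have pn: "prob_space (density lborel (normal_density 0 \<sigma>))"
    using prob_space_normal_density sig by auto
  show PG: "prob_space Gm" unfolding Gm_def by (rule prob_space_PiM) (use pn in auto)
  interpret PG: prob_space Gm by fact
  have comp: "distr Gm (density lborel (normal_density 0 \<sigma>)) (\<lambda>e. e h) = density lborel (normal_density 0 \<sigma>)" if "h < p" for h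
    unfolding Gm_def by (rule distr_PiM_component) (use pn that in auto)
  have comp2: "distr Gm lborel (\<lambda>e. e h) = density lborel (normal_density 0 \<sigma>)" if "h < p" for h
  proof -
    have "distr Gm lborel (\<lambda>e. e h) = distr Gm (density lborel (normal_density 0 \<sigma>)) (\<lambda>e. e h)"
      by (rule distr_cong) auto
    then show ?thesis using comp[OF that] by simp
  qed
  have meas: "(\<lambda>e. e h) \<in> measurable Gm lborel" if "h < p" for h
  proof -
    have "(\<lambda>e. e h) \<in> measurable Gm (density lborel (normal_density 0 \<sigma>))"
      unfolding Gm_def by (rule measurable_component_singleton) (use that in auto)
    then show ?thesis using measurable_cong_sets[OF refl, of "density lborel (normal_density 0 \<sigma>)" lborel Gm] by simp
  qed
  show "\<And>h. h < p \<Longrightarrow> distributed Gm lborel (\<lambda>e. e h) (normal_density 0 \<sigma>)"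
    unfolding distributed_def using comp2 meas by auto
  show "prob_space.indep_vars Gm (\<lambda>_. borel) (\<lambda>h e. e h) {..<p}" if "p > 0"
  proof (subst PG.indep_vars_iff_distr_eq_PiM')
    show "{..<p} \<noteq> {}" using that by auto
    show "(\<lambda>e. e h) \<in> measurable Gm borel" if "h \<in> {..<p}" for h
      using meas[of h] that by simp
    have "distr Gm (\<Pi>\<^sub>M h\<in>{..<p}. borel) (\<lambda>x. \<lambda>h\<in>{..<p}. x h) = distr Gm Gm (\<lambda>x. x)"
      by (rule distr_cong) (auto simp: Gm_def space_PiM intro!: sets_PiM_cong)
    also have "\<dots> = Gm" by simp
    also have "Gm = (\<Pi>\<^sub>M h\<in>{..<p}. distr Gm borel (\<lambda>e. e h))"
    proof -
      have eqd: "distr Gm borel (\<lambda>e. e h) = density lborel (normal_density 0 \<sigma>)" if "h \<in> {..<p}" for h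
        using comp2[of h] distr_cong[OF refl sets_lborel, of Gm "\<lambda>e. e h" "\<lambda>e. e h"] that by simp
      have "(\<Pi>\<^sub>M h\<in>{..<p}. distr Gm borel (\<lambda>e. e h)) = (\<Pi>\<^sub>M h\<in>{..<p}. density lborel (normal_density 0 \<sigma>))"
        by (rule PiM_cong) (auto simp: eqd)
      then show ?thesis unfolding Gm_def by simp
    qed
    finally show "distr Gm (\<Pi>\<^sub>M h\<in>{..<p}. borel) (\<lambda>x. \<lambda>h\<in>{..<p}. x h) = (\<Pi>\<^sub>M h\<in>{..<p}. distr Gm borel (\<lambda>e. e h))" .
  qed
qed
lemma gauss_moments:
  fixes \<sigma> :: real and p :: nat and a :: "nat \<Rightarrow> real"
  assumes sig: "\<sigma> > 0"
  defines "Gm \<equiv> PiM {..<p} (\<lambda>_. density lborel (normal_density 0 \<sigma>))"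
  defines "v \<equiv> \<sigma>\<^sup>2 * (\<Sum>h<p. (a h)\<^sup>2)"
  shows "integrable Gm (\<lambda>e. (\<Sum>h<p. a h * e h) ^ k)"
    and "(\<integral>e. (\<Sum>h<p. a h * e h) \<partial>Gm) = 0"
    and "(\<integral>e. (\<Sum>h<p. a h * e h)\<^sup>2 \<partial>Gm) = v"
    and "(\<integral>e. (\<Sum>h<p. a h * e h) ^ 4 \<partial>Gm) = 3 * v\<^sup>2"
proof -
  interpret PG: prob_space Gm using gauss_coord(1)[OF sig] unfolding Gm_def .
  define H where "H = {h. h < p \<and> a h \<noteq> 0}"
  have finH: "finite H" unfolding H_def by auto
  have Weq: "(\<Sum>h<p. a h * e h) = (\<Sum>h\<in>H. a h * e h)" for e
    unfolding H_def by (rule sum.mono_neutral_right) auto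
  have veq: "v = \<sigma>\<^sup>2 * (\<Sum>h\<in>H. (a h)\<^sup>2)"
  proof -
    have "(\<Sum>h<p. (a h)\<^sup>2) = (\<Sum>h\<in>H. (a h)\<^sup>2)"
      unfolding H_def by (rule sum.mono_neutral_right) auto
    then show ?thesis by (simp add: v_def)
  qed
  have "integrable Gm (\<lambda>e. (\<Sum>h<p. a h * e h) ^ k) \<and>
    (\<integral>e. (\<Sum>h<p. a h * e h) ^ k \<partial>Gm) = (\<integral>x. normal_density 0 (sqrt v) x * (x - 0) ^ k \<partial>lborel)" if vpos: "v > 0" for k
  proof -
    have Hne: "H \<noteq> {}"
    proof
      assume "H = {}" then show False using vpos veq by simp
    qed
    have ind0: "prob_space.indep_vars Gm (\<lambda>_. borel) (\<lambda>h e. e h) {..<p}"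
      using gauss_coord(3)[OF sig, of p] Hne unfolding Gm_def H_def by auto
    have ind: "prob_space.indep_vars Gm (\<lambda>_. borel) (\<lambda>h e. a h * e h) H"
      by (rule PG.indep_vars_compose2[OF PG.indep_vars_subset[OF ind0]]) (auto simp: H_def)
    have dist: "distributed Gm lborel (\<lambda>e. a h * e h) (normal_density 0 (\<bar>a h\<bar> * \<sigma>))" if "h \<in> H" for h
      using PG.normal_density_affine[OF gauss_coord(2)[OF sig, of h p, folded Gm_def], of "a h" 0] that sig by (simp add: H_def)
    have "distributed Gm lborel (\<lambda>x. \<Sum>h\<in>H. a h * x h) (normal_density (\<Sum>h\<in>H. 0) (sqrt (\<Sum>h\<in>H. (\<bar>a h\<bar> * \<sigma>)\<^sup>2)))"
      by (rule PG.sum_indep_normal[OF finH Hne ind]) (use dist sig in \<open>auto simp: H_def\<close>)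
    moreover have "sqrt (\<Sum>h\<in>H. (\<bar>a h\<bar> * \<sigma>)\<^sup>2) = sqrt v"
      unfolding veq by (simp add: power_mult_distrib sum_distrib_left mult.commute)
    ultimately have D: "distributed Gm lborel (\<lambda>x. \<Sum>h<p. a h * x h) (normal_density 0 (sqrt v))"
      by (simp add: Weq)
    have i1: "integrable lborel (\<lambda>x. normal_density 0 (sqrt v) x * x ^ k)"
      using integrable_normal_moment[of "sqrt v" 0 k] vpos by simp
    show ?thesis
      using distributed_integrable[OF D, of "\<lambda>x. x ^ k"] distributed_integral[OF D, of "\<lambda>x. x ^ k"] i1 by simp
  qed
  note main = this
  have v0: "v \<ge> 0" unfolding v_def by (simp add: sum_nonneg)
  show "integrable Gm (\<lambda>e. (\<Sum>h<p. a h * e h) ^ k)"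
  proof (cases "v > 0")
    case True then show ?thesis using main by blast
  next
    case False
    then have "H = {}" using v0 veq sig finH by (auto simp: sum_nonneg_eq_0_iff H_def)
    then show ?thesis using Weq by (cases k) simp_all
  qed
  show "(\<integral>e. (\<Sum>h<p. a h * e h) \<partial>Gm) = 0"
  proof (cases "v > 0")
    case True then show ?thesis using main[of 1] integral_normal_moment_odd[of "sqrt v" 0 0] by simp
  next
    case False
    then have "H = {}" using v0 veq sig finH by (auto simp: sum_nonneg_eq_0_iff H_def)
    then show ?thesis using Weq by simp
  qed
  show "(\<integral>e. (\<Sum>h<p. a h * e h)\<^sup>2 \<partial>Gm) = v"
  proof (cases "v > 0")
    case True then show ?thesis using main[of 2] integral_normal_moment_even[of "sqrt v" 0 1] by simp
  next
    case False
    then have "H = {}" using v0 veq sig finH by (auto simp: sum_nonneg_eq_0_iff H_def)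
    then show ?thesis using Weq False v0 by simp
  qed
  show "(\<integral>e. (\<Sum>h<p. a h * e h) ^ 4 \<partial>Gm) = 3 * v\<^sup>2"
  proof (cases "v > 0")
    case True then show ?thesis using main[of 4] integral_normal_moment_even[of "sqrt v" 0 2]
      by (simp add: fact_numeral power2_eq_square field_simps)
  next
    case False
    then have "H = {}" using v0 veq sig finH by (auto simp: sum_nonneg_eq_0_iff H_def)
    then show ?thesis using Weq False v0 by simp
  qed
qed

lemma pair_mult:
  fixes u :: "'a \<Rightarrow> real" and w :: "'b \<Rightarrow> real"
  assumes PA: "prob_space A" and PB: "prob_space B" and iu: "integrable A u" and iw: "integrable B w"
  shows "integrable (A \<Otimes>\<^sub>M B) (\<lambda>x. u (fst x) * w (snd x))"
    and "(\<integral>x. u (fst x) * w (snd x) \<partial>(A \<Otimes>\<^sub>M B)) = integral\<^sup>L A u * integral\<^sup>L B w"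
proof -
  interpret A: prob_space A by fact
  interpret B: prob_space B by fact
  interpret P: pair_prob_space A B by unfold_locales
  have dfst: "distr (A \<Otimes>\<^sub>M B) A fst = A" by (rule B.distr_pair_fst)
  have dsnd: "distr (A \<Otimes>\<^sub>M B) B snd = B"
  proof (rule measure_eqI)
    fix X assume X: "X \<in> sets (distr (A \<Otimes>\<^sub>M B) B snd)"
    then have X': "X \<in> sets B" by simp
    have "snd -` X \<inter> space (A \<Otimes>\<^sub>M B) = space A \<times> X"
      using sets.sets_into_space[OF X'] by (auto simp: space_pair_measure)
    then show "emeasure (distr (A \<Otimes>\<^sub>M B) B snd) X = emeasure B X"
      using X' by (simp add: emeasure_distr B.emeasure_pair_measure_Times[OF sets.top[of A] X'] A.emeasure_space_1)
  qed simp
  have bu: "u \<in> borel_measurable A" using iu by auto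
  have bw: "w \<in> borel_measurable B" using iw by auto
  have d1: "distr (A \<Otimes>\<^sub>M B) borel (\<lambda>x. u (fst x)) = distr A borel u"
    using distr_distr[of u A borel fst "A \<Otimes>\<^sub>M B"] dfst bu by (simp add: comp_def)
  have d2: "distr (A \<Otimes>\<^sub>M B) borel (\<lambda>x. w (snd x)) = distr B borel w"
    using distr_distr[of w B borel snd "A \<Otimes>\<^sub>M B"] dsnd bw by (simp add: comp_def)
  have sf: "sigma_finite_measure (distr B borel w)"
    using B.prob_space_distr[OF bw] by (simp add: prob_space_imp_sigma_finite)
  have ind: "P.indep_var borel (\<lambda>x. u (fst x)) borel (\<lambda>x. w (snd x))"
    unfolding P.indep_var_distribution_eq using bu bw d1 d2 pair_measure_distr[OF bu bw sf]
    by (simp add: split_beta')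
  have iu': "integrable (A \<Otimes>\<^sub>M B) (\<lambda>x. u (fst x))"
    using iu integrable_distr_eq[of fst "A \<Otimes>\<^sub>M B" A u] dfst bu by simp
  have iw': "integrable (A \<Otimes>\<^sub>M B) (\<lambda>x. w (snd x))"
    using iw integrable_distr_eq[of snd "A \<Otimes>\<^sub>M B" B w] dsnd bw by simp
  have eu: "(\<integral>x. u (fst x) \<partial>(A \<Otimes>\<^sub>M B)) = integral\<^sup>L A u"
    by (subst dfst[symmetric], subst integral_distr) (use bu in auto)
  have ew: "(\<integral>x. w (snd x) \<partial>(A \<Otimes>\<^sub>M B)) = integral\<^sup>L B w"
    by (subst dsnd[symmetric], subst integral_distr) (use bw in auto)
  show "integrable (A \<Otimes>\<^sub>M B) (\<lambda>x. u (fst x) * w (snd x))"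
    by (rule P.indep_var_integrable[OF ind iu' iw'])
  show "(\<integral>x. u (fst x) * w (snd x) \<partial>(A \<Otimes>\<^sub>M B)) = integral\<^sup>L A u * integral\<^sup>L B w"
    using P.indep_var_lebesgue_integral[OF ind iu' iw'] eu ew by simp
qed

lemma low_moment_integrable:
  fixes U :: "'a \<Rightarrow> real"
  assumes "prob_space A" "U \<in> borel_measurable A" "integrable A (\<lambda>x. U x ^ 4)" "k \<le> 4"
  shows "integrable A (\<lambda>x. U x ^ k)"
proof -
  interpret prob_space A by fact
  have b: "\<bar>y ^ k\<bar> \<le> \<bar>1 + y ^ 4\<bar>" for y :: real
  proof (cases "\<bar>y\<bar> \<le> 1")
    case True
    then have "\<bar>y\<bar> ^ k \<le> 1" by (simp add: power_le_one)
    moreover have "0 \<le> y ^ 4" by (simp add: zero_le_even_power)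
    moreover have "\<bar>y ^ k\<bar> = \<bar>y\<bar> ^ k" by (simp add: power_abs)
    ultimately show ?thesis by linarith
  next
    case False
    then have "\<bar>y\<bar> ^ k \<le> \<bar>y\<bar> ^ 4" using assms(4) by (intro power_increasing) auto
    moreover have "\<bar>y\<bar> ^ 4 = y ^ 4" by (simp add: power_abs[symmetric] zero_le_even_power)
    moreover have "0 \<le> y ^ 4" by (simp add: zero_le_even_power)
    moreover have "\<bar>y ^ k\<bar> = \<bar>y\<bar> ^ k" by (simp add: power_abs)
    ultimately show ?thesis by linarith
  qed
  show ?thesis
    by (rule Bochner_Integration.integrable_bound[where f="\<lambda>x. 1 + U x ^ 4"])
       (use assms b in auto)
qed

lemma fourth_moment:
  fixes A :: "'a measure" and U :: "'a \<Rightarrow> real" and \<sigma> C1 :: real and p :: nat and a :: "nat \<Rightarrow> real"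
  assumes PA: "prob_space A" and sig: "\<sigma> > 0" and C1: "C1 > 0"
    and Um: "U \<in> borel_measurable A" and U4: "integrable A (\<lambda>x. U x ^ 4)"
    and U0: "(\<integral>x. U x \<partial>A) = 0"
    and Ub: "(\<integral>x. U x ^ 4 \<partial>A) \<le> C1 * (\<integral>x. (U x)\<^sup>2 \<partial>A)\<^sup>2"
  defines "Gm \<equiv> PiM {..<p} (\<lambda>_. density lborel (normal_density 0 \<sigma>))"
  shows "integrable (A \<Otimes>\<^sub>M Gm) (\<lambda>x. (U (fst x) + (\<Sum>h<p. a h * snd x h)) ^ 4)"
    and "(\<integral>x. (U (fst x) + (\<Sum>h<p. a h * snd x h)) ^ 4 \<partial>(A \<Otimes>\<^sub>M Gm))
          \<le> max (C1 + 3) 6 * (\<sigma>\<^sup>2 * (\<Sum>h<p. (a h)\<^sup>2) + (\<integral>x. (U x)\<^sup>2 \<partial>A))\<^sup>2"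
proof -
  interpret A: prob_space A by fact
  have PG: "prob_space Gm" using gauss_coord(1)[OF sig] unfolding Gm_def .
  interpret G: prob_space Gm by fact
  define W where "W e = (\<Sum>h<p. a h * e h)" for e :: "nat \<Rightarrow> real"
  define v where "v = \<sigma>\<^sup>2 * (\<Sum>h<p. (a h)\<^sup>2)"
  define s where "s = (\<integral>x. (U x)\<^sup>2 \<partial>A)"
  have iU: "integrable A (\<lambda>x. U x ^ k)" if "k \<le> 4" for k
    by (rule low_moment_integrable[OF PA Um U4 that])
  have iW: "integrable Gm (\<lambda>e. W e ^ k)" for k
    unfolding W_def Gm_def by (rule gauss_moments(1)[OF sig])
  have W1: "(\<integral>e. W e \<partial>Gm) = 0" unfolding W_def Gm_def by (rule gauss_moments(2)[OF sig])
  have W2: "(\<integral>e. (W e)\<^sup>2 \<partial>Gm) = v" unfolding W_def Gm_def v_def by (rule gauss_moments(3)[OF sig])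
  have W4: "(\<integral>e. (W e) ^ 4 \<partial>Gm) = 3 * v\<^sup>2" unfolding W_def Gm_def v_def by (rule gauss_moments(4)[OF sig])
  have expand: "(U (fst x) + W (snd x)) ^ 4 = (\<Sum>k\<le>4. of_nat (4 choose k) * (U (fst x) ^ k * W (snd x) ^ (4 - k)))" for x
    by (subst binomial_ring) (simp add: mult.assoc)
  have term_int: "integrable (A \<Otimes>\<^sub>M Gm) (\<lambda>x. U (fst x) ^ k * W (snd x) ^ (4 - k))"
    and term_val: "(\<integral>x. U (fst x) ^ k * W (snd x) ^ (4 - k) \<partial>(A \<Otimes>\<^sub>M Gm)) = (\<integral>x. U x ^ k \<partial>A) * (\<integral>e. W e ^ (4 - k) \<partial>Gm)"
    if "k \<le> 4" for k
    using pair_mult[OF PA PG iU[OF that] iW[of "4 - k"]] by auto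
  have I: "integrable (A \<Otimes>\<^sub>M Gm) (\<lambda>x. (U (fst x) + W (snd x)) ^ 4)"
    unfolding expand by (intro Bochner_Integration.integrable_sum integrable_mult_right term_int) auto
  then show "integrable (A \<Otimes>\<^sub>M Gm) (\<lambda>x. (U (fst x) + (\<Sum>h<p. a h * snd x h)) ^ 4)"
    unfolding W_def .
  have "(\<integral>x. (U (fst x) + W (snd x)) ^ 4 \<partial>(A \<Otimes>\<^sub>M Gm))
      = (\<Sum>k\<le>4. of_nat (4 choose k) * ((\<integral>x. U x ^ k \<partial>A) * (\<integral>e. W e ^ (4 - k) \<partial>Gm)))"
    unfolding expand
    by (subst Bochner_Integration.integral_sum) (auto intro!: sum.cong integrable_mult_right term_int simp: term_val)
  also have "\<dots> = (\<integral>x. U x ^ 4 \<partial>A) + 6 * s * v + 3 * v\<^sup>2"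
    using U0 W1 W2 W4 by (simp add: eval_nat_numeral s_def power2_eq_square A.prob_space G.prob_space)
  also have "\<dots> \<le> max (C1 + 3) 6 * (v + s)\<^sup>2"
  proof -
    have s0: "s \<ge> 0" unfolding s_def by simp
    have v0: "v \<ge> 0" unfolding v_def by (simp add: sum_nonneg)
    define K where "K = max (C1 + 3) 6"
    have "C1 * s\<^sup>2 \<le> K * s\<^sup>2" unfolding K_def by (intro mult_right_mono) auto
    moreover have "6 * s * v \<le> 2 * K * s * v" unfolding K_def using s0 v0
      by (intro mult_right_mono) auto
    moreover have "3 * v\<^sup>2 \<le> K * v\<^sup>2" unfolding K_def by (intro mult_right_mono) auto
    ultimately have "C1 * s\<^sup>2 + 6 * s * v + 3 * v\<^sup>2 \<le> K * (v + s)\<^sup>2"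
      by (simp add: power2_eq_square algebra_simps)
    then show ?thesis using Ub unfolding K_def s_def by linarith
  qed
  finally show "(\<integral>x. (U (fst x) + (\<Sum>h<p. a h * snd x h)) ^ 4 \<partial>(A \<Otimes>\<^sub>M Gm))
          \<le> max (C1 + 3) 6 * (\<sigma>\<^sup>2 * (\<Sum>h<p. (a h)\<^sup>2) + (\<integral>x. (U x)\<^sup>2 \<partial>A))\<^sup>2"
    unfolding W_def v_def s_def .
qed

lemma discr:
  fixes A B C :: real
  assumes A0: "A \<ge> 0" and h: "\<And>t. 0 \<le> t\<^sup>2 * A - 2 * t * B + C"
  shows "B\<^sup>2 \<le> A * C"
proof (cases "A = 0")
  case True
  show ?thesis
  proof (cases "B = 0")
    case True then show ?thesis using h[of 0] \<open>A = 0\<close> by simp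
  next
    case False
    have "0 \<le> ((C + 1) / (2 * B))\<^sup>2 * A - 2 * ((C + 1) / (2 * B)) * B + C" by (rule h)
    then show ?thesis using False \<open>A = 0\<close> by simp
  qed
next
  case False
  have Ap: "A > 0" using False A0 by simp
  have "0 \<le> (B / A)\<^sup>2 * A - 2 * (B / A) * B + C" by (rule h)
  then have "0 \<le> C - B\<^sup>2 / A" using Ap by (simp add: power2_eq_square field_simps)
  then show ?thesis using Ap by (simp add: field_simps)
qed

lemma cs_int:
  fixes X Y :: "'a \<Rightarrow> real"
  assumes mX: "X \<in> borel_measurable N" and mY: "Y \<in> borel_measurable N"
    and iX: "integrable N (\<lambda>x. (X x)\<^sup>2)" and iY: "integrable N (\<lambda>x. (Y x)\<^sup>2)"
  shows "integrable N (\<lambda>x. X x * Y x)"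
    and "(\<integral>x. X x * Y x \<partial>N)\<^sup>2 \<le> (\<integral>x. (X x)\<^sup>2 \<partial>N) * (\<integral>x. (Y x)\<^sup>2 \<partial>N)"
proof -
  have b: "\<bar>u * w\<bar> \<le> \<bar>u\<^sup>2 + w\<^sup>2\<bar>" for u w :: real
  proof -
    have "2 * \<bar>u\<bar> * \<bar>w\<bar> \<le> \<bar>u\<bar>\<^sup>2 + \<bar>w\<bar>\<^sup>2" using sum_squares_bound[of "\<bar>u\<bar>" "\<bar>w\<bar>"] by simp
    moreover have "0 \<le> \<bar>u\<bar> * \<bar>w\<bar>" by simp
    ultimately have "\<bar>u\<bar> * \<bar>w\<bar> \<le> u\<^sup>2 + w\<^sup>2" by (simp only: power2_abs)
    moreover have "\<bar>u\<^sup>2 + w\<^sup>2\<bar> = u\<^sup>2 + w\<^sup>2" by simp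
    ultimately show ?thesis by (simp add: abs_mult)
  qed
  show iXY: "integrable N (\<lambda>x. X x * Y x)"
    by (rule Bochner_Integration.integrable_bound[where f="\<lambda>x. (X x)\<^sup>2 + (Y x)\<^sup>2"])
       (use iX iY mX mY b in auto)
  show "(\<integral>x. X x * Y x \<partial>N)\<^sup>2 \<le> (\<integral>x. (X x)\<^sup>2 \<partial>N) * (\<integral>x. (Y x)\<^sup>2 \<partial>N)"
  proof (rule discr)
    show "0 \<le> (\<integral>x. (X x)\<^sup>2 \<partial>N)" by simp
    fix t :: real
    have "(\<lambda>x. (t * X x - Y x)\<^sup>2) = (\<lambda>x. t\<^sup>2 * (X x)\<^sup>2 - 2 * t * (X x * Y x) + (Y x)\<^sup>2)"
      by (auto simp: power2_eq_square algebra_simps)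
    then have "(\<integral>x. (t * X x - Y x)\<^sup>2 \<partial>N) = t\<^sup>2 * (\<integral>x. (X x)\<^sup>2 \<partial>N) - 2 * t * (\<integral>x. X x * Y x \<partial>N) + (\<integral>x. (Y x)\<^sup>2 \<partial>N)"
      using iX iY iXY by simp
    moreover have "0 \<le> (\<integral>x. (t * X x - Y x)\<^sup>2 \<partial>N)" by simp
    ultimately show "0 \<le> t\<^sup>2 * (\<integral>x. (X x)\<^sup>2 \<partial>N) - 2 * t * (\<integral>x. X x * Y x \<partial>N) + (\<integral>x. (Y x)\<^sup>2 \<partial>N)" by simp
  qed
qed

lemma abs_le_1_sq: "\<bar>y\<bar> \<le> 1 + y\<^sup>2" for y :: real
proof -
  have "0 \<le> (\<bar>y\<bar> - 1/2)\<^sup>2" by simp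
  also have "(\<bar>y\<bar> - 1/2)\<^sup>2 = y\<^sup>2 - \<bar>y\<bar> + 1/4"
    by (simp add: power2_diff power2_abs algebra_simps power2_eq_square)
  finally show ?thesis by linarith
qed

lemma emp_var:
  fixes M :: "'w measure" and V :: "nat \<Rightarrow> 'w \<Rightarrow> 's" and g :: "'s \<Rightarrow> real"
  assumes PM: "prob_space M" and n: "n \<ge> 1"
    and Vm: "\<And>i. i \<in> {1..n} \<Longrightarrow> V i \<in> measurable M S"
    and ind: "prob_space.indep_vars M (\<lambda>_. S) V {1..n}"
    and law: "\<And>i. i \<in> {1..n} \<Longrightarrow> distr M S (V i) = N"
    and gm: "g \<in> borel_measurable S" and g2: "integrable N (\<lambda>x. (g x)\<^sup>2)"
  shows "integrable M (\<lambda>\<omega>. ((1 / real n) * (\<Sum>i=1..n. g (V i \<omega>))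
            - (\<integral>\<omega>'. (1 / real n) * (\<Sum>i=1..n. g (V i \<omega>')) \<partial>M))\<^sup>2)"
    and "(\<integral>\<omega>. ((1 / real n) * (\<Sum>i=1..n. g (V i \<omega>))
            - (\<integral>\<omega>'. (1 / real n) * (\<Sum>i=1..n. g (V i \<omega>')) \<partial>M))\<^sup>2 \<partial>M)
         \<le> (1 / real n) * (\<integral>x. (g x)\<^sup>2 \<partial>N)"
proof -
  interpret prob_space M by fact
  have PN: "prob_space N" using law[of 1] n prob_space_distr[OF Vm[of 1]] by auto
  interpret N: prob_space N by fact
  have sN: "sets N = sets S" using law[of 1] n by (metis atLeastAtMost_iff order_refl sets_distr)
  have gmN: "g \<in> borel_measurable N" by (subst measurable_cong_sets[OF sN refl]) (rule gm)
  have gN: "integrable N g"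
  proof (rule Bochner_Integration.integrable_bound[where f="\<lambda>x. 1 + (g x)\<^sup>2"])
    show "integrable N (\<lambda>x. 1 + (g x)\<^sup>2)" using g2 by simp
    show "g \<in> borel_measurable N" by (rule gmN)
    show "AE x in N. norm (g x) \<le> norm (1 + (g x)\<^sup>2)"
    proof (rule AE_I2)
      fix x
      have "\<bar>g x\<bar> \<le> 1 + (g x)\<^sup>2" by (rule abs_le_1_sq)
      then show "norm (g x) \<le> norm (1 + (g x)\<^sup>2)" by simp
    qed
  qed
  define c where "c = (\<integral>x. g x \<partial>N)"
  define D where "D i \<omega> = g (V i \<omega>) - c" for i \<omega>
  have comp_int: "integrable M (\<lambda>\<omega>. h (V i \<omega>))" if "i \<in> {1..n}" "integrable N h" for i and h :: "'s \<Rightarrow> real"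
  proof -
    have "h \<in> borel_measurable N" using that(2) by auto
    then have "h \<in> borel_measurable S" using measurable_cong_sets[OF sN refl, of borel] by metis
    then show ?thesis using integrable_distr_eq[OF Vm[OF that(1)], of h] law[OF that(1)] that(2) by simp
  qed
  have comp_val: "(\<integral>\<omega>. h (V i \<omega>) \<partial>M) = (\<integral>x. h x \<partial>N)" if "i \<in> {1..n}" "h \<in> borel_measurable S" for i and h :: "'s \<Rightarrow> real"
    using integral_distr[OF Vm[OF that(1)] that(2)] law[OF that(1)] by simp
  have EG: "(\<integral>\<omega>'. (1 / real n) * (\<Sum>i=1..n. g (V i \<omega>')) \<partial>M) = c"
  proof -
    have "(\<integral>\<omega>'. (1 / real n) * (\<Sum>i=1..n. g (V i \<omega>')) \<partial>M) = (1 / real n) * (\<Sum>i=1..n. \<integral>\<omega>. g (V i \<omega>) \<partial>M)"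
      by (subst integral_mult_right_zero, subst Bochner_Integration.integral_sum) (auto intro: comp_int gN)
    also have "\<dots> = (1 / real n) * (\<Sum>i=1..n. c)"
      using comp_val[OF _ gm] unfolding c_def by simp
    also have "\<dots> = c" using n by simp
    finally show ?thesis .
  qed
  have Deq: "(1 / real n) * (\<Sum>i=1..n. g (V i \<omega>)) - c = (1 / real n) * (\<Sum>i=1..n. D i \<omega>)" for \<omega>
    using n by (simp add: D_def sum_subtractf field_simps)
  have sq: "((1 / real n) * (\<Sum>i=1..n. D i \<omega>))\<^sup>2 = (1 / real n)\<^sup>2 * (\<Sum>i=1..n. \<Sum>j=1..n. D i \<omega> * D j \<omega>)" for \<omega>
    by (simp add: power2_eq_square sum_product)
  have D2: "integrable M (\<lambda>\<omega>. (D i \<omega>)\<^sup>2)" if "i \<in> {1..n}" for i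
  proof -
    have "(\<lambda>\<omega>. (D i \<omega>)\<^sup>2) = (\<lambda>\<omega>. (g (V i \<omega>))\<^sup>2 - 2 * c * g (V i \<omega>) + c\<^sup>2)"
      by (auto simp: D_def power2_eq_square algebra_simps)
    then show ?thesis using comp_int[OF that g2] comp_int[OF that gN] by simp
  qed
  have Dm: "D i \<in> borel_measurable M" if "i \<in> {1..n}" for i
    using measurable_comp[OF Vm[OF that] gm] unfolding D_def by (simp add: comp_def)
  have DD: "integrable M (\<lambda>\<omega>. D i \<omega> * D j \<omega>)" if "i \<in> {1..n}" "j \<in> {1..n}" for i j
    by (rule cs_int(1)[OF Dm[OF that(1)] Dm[OF that(2)] D2[OF that(1)] D2[OF that(2)]])
  have indD: "indep_vars (\<lambda>_. borel) D {1..n}"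
    unfolding D_def by (rule indep_vars_compose2[OF ind]) (use gm in auto)
  have ED: "(\<integral>\<omega>. D i \<omega> \<partial>M) = 0" if "i \<in> {1..n}" for i
    using comp_int[OF that gN] comp_val[OF that gm] unfolding D_def c_def by (simp add: prob_space)
  have Dint: "integrable M (D i)" if "i \<in> {1..n}" for i
    using comp_int[OF that gN] unfolding D_def by simp
  have cross: "(\<integral>\<omega>. D i \<omega> * D j \<omega> \<partial>M) = 0" if "i \<in> {1..n}" "j \<in> {1..n}" "i \<noteq> j" for i j
  proof -
    have ij: "indep_vars (\<lambda>_. borel) D {i, j}"
      by (rule indep_vars_subset[OF indD]) (use that in auto)
    have "(\<integral>\<omega>. (\<Prod>k\<in>{i,j}. D k \<omega>) \<partial>M) = (\<Prod>k\<in>{i,j}. \<integral>\<omega>. D k \<omega> \<partial>M)"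
      by (rule indep_vars_lebesgue_integral[OF _ ij]) (use that Dint in auto)
    then show ?thesis using that ED by simp
  qed
  have diag: "(\<integral>\<omega>. D i \<omega> * D i \<omega> \<partial>M) = (\<integral>x. (g x)\<^sup>2 \<partial>N) - c\<^sup>2" if "i \<in> {1..n}" for i
  proof -
    have "(\<lambda>\<omega>. D i \<omega> * D i \<omega>) = (\<lambda>\<omega>. (g (V i \<omega>))\<^sup>2 - 2 * c * g (V i \<omega>) + c\<^sup>2)"
      by (auto simp: D_def power2_eq_square algebra_simps)
    then have "(\<integral>\<omega>. D i \<omega> * D i \<omega> \<partial>M) = (\<integral>\<omega>. (g (V i \<omega>))\<^sup>2 \<partial>M) - 2 * c * (\<integral>\<omega>. g (V i \<omega>) \<partial>M) + c\<^sup>2"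
      using comp_int[OF that g2] comp_int[OF that gN] by (simp add: prob_space)
    also have "\<dots> = (\<integral>x. (g x)\<^sup>2 \<partial>N) - 2 * c * c + c\<^sup>2"
      using comp_val[OF that gm] comp_val[OF that, of "\<lambda>x. (g x)\<^sup>2"] gm unfolding c_def by simp
    finally show ?thesis by (simp add: power2_eq_square)
  qed
  have fe: "(\<lambda>\<omega>. ((1 / real n) * (\<Sum>i=1..n. g (V i \<omega>))
            - (\<integral>\<omega>'. (1 / real n) * (\<Sum>i=1..n. g (V i \<omega>')) \<partial>M))\<^sup>2)
      = (\<lambda>\<omega>. (1 / real n)\<^sup>2 * (\<Sum>i=1..n. \<Sum>j=1..n. D i \<omega> * D j \<omega>))"
    unfolding EG Deq sq ..
  show "integrable M (\<lambda>\<omega>. ((1 / real n) * (\<Sum>i=1..n. g (V i \<omega>))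
            - (\<integral>\<omega>'. (1 / real n) * (\<Sum>i=1..n. g (V i \<omega>')) \<partial>M))\<^sup>2)"
    unfolding fe by (intro integrable_mult_right Bochner_Integration.integrable_sum DD) auto
  have "(\<integral>\<omega>. (1 / real n)\<^sup>2 * (\<Sum>i=1..n. \<Sum>j=1..n. D i \<omega> * D j \<omega>) \<partial>M)
      = (1 / real n)\<^sup>2 * (\<Sum>i=1..n. \<Sum>j=1..n. \<integral>\<omega>. D i \<omega> * D j \<omega> \<partial>M)"
    by (subst integral_mult_right_zero, subst Bochner_Integration.integral_sum)
       (auto intro!: Bochner_Integration.integrable_sum DD sum.cong Bochner_Integration.integral_sum)
  also have "\<dots> = (1 / real n)\<^sup>2 * (\<Sum>i=1..n. (\<integral>x. (g x)\<^sup>2 \<partial>N) - c\<^sup>2)"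
  proof -
    have "(\<Sum>j=1..n. \<integral>\<omega>. D i \<omega> * D j \<omega> \<partial>M) = (\<integral>x. (g x)\<^sup>2 \<partial>N) - c\<^sup>2" if "i \<in> {1..n}" for i
    proof -
      have "(\<Sum>j=1..n. \<integral>\<omega>. D i \<omega> * D j \<omega> \<partial>M) = (\<Sum>j\<in>{i}. \<integral>\<omega>. D i \<omega> * D j \<omega> \<partial>M)"
        by (rule sum.mono_neutral_right) (use that cross in auto)
      then show ?thesis using diag[OF that] by simp
    qed
    then show ?thesis by simp
  qed
  also have "\<dots> = (1 / real n) * ((\<integral>x. (g x)\<^sup>2 \<partial>N) - c\<^sup>2)"
    using n by (simp add: power2_eq_square field_simps)
  also have "\<dots> \<le> (1 / real n) * (\<integral>x. (g x)\<^sup>2 \<partial>N)"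
    by (intro mult_left_mono) auto
  finally show "(\<integral>\<omega>. ((1 / real n) * (\<Sum>i=1..n. g (V i \<omega>))
            - (\<integral>\<omega>'. (1 / real n) * (\<Sum>i=1..n. g (V i \<omega>')) \<partial>M))\<^sup>2 \<partial>M)
         \<le> (1 / real n) * (\<integral>x. (g x)\<^sup>2 \<partial>N)"
    unfolding fe .
qed

theorem lemma1:
  fixes M :: "'w measure"
    and Z0 :: "'w \<Rightarrow> real \<Rightarrow> real"
    and Z :: "nat \<Rightarrow> 'w \<Rightarrow> real \<Rightarrow> real"
    and eps :: "nat \<Rightarrow> nat \<Rightarrow> 'w \<Rightarrow> real"
    and \<sigma> C1 :: real and n p :: nat
    and \<Lambda> :: "'l set" and \<phi> :: "'l \<Rightarrow> real \<Rightarrow> real"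
  assumes M: "prob_space M"
    and n: "n \<ge> 1" and p: "p \<ge> 2" and sigma: "\<sigma> > 0"
    and Lam: "finite \<Lambda>"
    \<comment> \<open>the generic process Z: measurable, continuous paths, centered, second moments\<close>
    and Z0_meas: "\<And>t. (\<lambda>\<omega>. Z0 \<omega> t) \<in> borel_measurable M"
    and Z0_cont: "\<And>\<omega>. \<omega> \<in> space M \<Longrightarrow> continuous_on {0..1} (Z0 \<omega>)"
    and Z0_centered: "\<And>t. t \<in> {0..1} \<Longrightarrow>
          integrable M (\<lambda>\<omega>. Z0 \<omega> t) \<and> (\<integral>\<omega>. Z0 \<omega> t \<partial>M) = 0"
    and Z0_sq: "\<And>t. t \<in> {0..1} \<Longrightarrow> integrable M (\<lambda>\<omega>. (Z0 \<omega> t)\<^sup>2)"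
    \<comment> \<open>the copies and noise: measurable, continuous paths\<close>
    and Z_meas: "\<And>i t. (\<lambda>\<omega>. Z i \<omega> t) \<in> borel_measurable M"
    and Z_cont: "\<And>i \<omega>. i \<in> {1..n} \<Longrightarrow> \<omega> \<in> space M \<Longrightarrow> continuous_on {0..1} (Z i \<omega>)"
    and eps_meas: "\<And>i h. eps i h \<in> borel_measurable M"
    \<comment> \<open>for each i, (Z_i, eps_{i,0..p-1}) has law  Law(Z) x N(0,sigma^2)^p :
        Z_i is a copy of Z, independent of the i.i.d. Gaussian noise\<close>
    and law: "\<And>i. i \<in> {1..n} \<Longrightarrow>
        distr M ((\<Pi>\<^sub>M t\<in>UNIV. borel) \<Otimes>\<^sub>M (\<Pi>\<^sub>M h\<in>{..<p}. borel))
          (\<lambda>\<omega>. (Z i \<omega>, \<lambda>h\<in>{..<p}. eps i h \<omega>))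
        = distr M (\<Pi>\<^sub>M t\<in>UNIV. borel) Z0
            \<Otimes>\<^sub>M (\<Pi>\<^sub>M h\<in>{..<p}. density lborel (normal_density 0 \<sigma>))"
    \<comment> \<open>independence across i = 1..n\<close>
    and indep: "prob_space.indep_vars M
        (\<lambda>_. (\<Pi>\<^sub>M t\<in>UNIV. borel) \<Otimes>\<^sub>M (\<Pi>\<^sub>M h\<in>{..<p}. borel))
        (\<lambda>i \<omega>. (Z i \<omega>, \<lambda>h\<in>{..<p}. eps i h \<omega>)) {1..n}"
    \<comment> \<open>fourth-moment condition on the vector (Z(t_0),...,Z(t_{p-1}))\<close>
    and C1: "C1 > 0"
    and moment4: "\<And>v :: nat \<Rightarrow> real.
        integrable M (\<lambda>\<omega>. (\<Sum>h<p. v h * Z0 \<omega> (grid p h)) ^ 4) \<and>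
        (\<integral>\<omega>. (\<Sum>h<p. v h * Z0 \<omega> (grid p h)) ^ 4 \<partial>M)
          \<le> C1 * (\<integral>\<omega>. (\<Sum>h<p. v h * Z0 \<omega> (grid p h))\<^sup>2 \<partial>M)\<^sup>2"
  shows "(\<integral>\<omega>. (\<Sum>l\<in>\<Lambda>. \<Sum>l'\<in>\<Lambda>.
             (Ghat n p Z eps \<phi> l l' \<omega> - (\<integral>\<omega>'. Ghat n p Z eps \<phi> l l' \<omega>' \<partial>M))\<^sup>2) \<partial>M)
         \<le> max (C1 + 3) 6 / real n *
            (\<Sum>l\<in>\<Lambda>. sigma2 \<sigma> p \<phi> l + s2 M Z0 p \<phi> l)\<^sup>2"
proof -
  interpret prob_space M by (rule M)
  define K where "K = max (C1 + 3) 6"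
  define S where "S = (\<Pi>\<^sub>M t\<in>(UNIV::real set). (borel::real measure)) \<Otimes>\<^sub>M (\<Pi>\<^sub>M h\<in>{..<p}. (borel::real measure))"
  define V where "V i \<omega> = (Z i \<omega>, \<lambda>h\<in>{..<p}. eps i h \<omega>)" for i \<omega>
  define A0 where "A0 = distr M (\<Pi>\<^sub>M t\<in>(UNIV::real set). (borel::real measure)) Z0"
  define Gm where "Gm = PiM {..<p} (\<lambda>_. density lborel (normal_density 0 \<sigma>))"
  define N where "N = A0 \<Otimes>\<^sub>M Gm"
  have lawN: "distr M S (V i) = N" if "i \<in> {1..n}" for i
    using law[OF that] unfolding S_def V_def N_def A0_def Gm_def by simp
  have Vm: "V i \<in> measurable M S" for i
  proof -
    have "(\<lambda>\<omega>. \<lambda>t. Z i \<omega> t) \<in> measurable M (\<Pi>\<^sub>M t\<in>(UNIV::real set). (borel::real measure))"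
      by (rule measurable_PiM_single') (use Z_meas in auto)
    moreover have "(\<lambda>\<omega>. \<lambda>h\<in>{..<p}. eps i h \<omega>) \<in> measurable M (\<Pi>\<^sub>M h\<in>{..<p}. (borel::real measure))"
      by (rule measurable_restrict) (use eps_meas in auto)
    ultimately show ?thesis unfolding V_def S_def by (intro measurable_Pair) auto
  qed
  have indV: "indep_vars (\<lambda>_. S) V {1..n}" using indep unfolding S_def V_def .
  define a where "a l h = \<phi> l (grid p h) / real p" for l h
  define U where "U l f = (\<Sum>h<p. a l h * f (grid p h))" for l and f :: "real \<Rightarrow> real"
  define F where "F l x = U l (fst x) + (\<Sum>h<p. a l h * snd x h)" for l and x :: "(real \<Rightarrow> real) \<times> (nat \<Rightarrow> real)"
  have grid01: "grid p h \<in> {0..1}" if "h < p" for h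
  proof -
    have "real h \<le> real (p - 1)" using that by simp
    moreover have "real (p - 1) > 0" using p by simp
    ultimately show ?thesis unfolding grid_def by (auto simp: divide_le_eq_1)
  qed
  have yt: "ytilde p Z eps \<phi> i l \<omega> = F l (V i \<omega>)" for i l \<omega>
  proof -
    have "ytilde p Z eps \<phi> i l \<omega> = (\<Sum>h<p. a l h * Z i \<omega> (grid p h)) + (\<Sum>h<p. a l h * eps i h \<omega>)"
      unfolding ytilde_def obsY_def a_def
      by (simp add: sum_distrib_left sum.distrib[symmetric] algebra_simps)
    also have "(\<Sum>h<p. a l h * eps i h \<omega>) = (\<Sum>h<p. a l h * (\<lambda>h\<in>{..<p}. eps i h \<omega>) h)"
      by (rule sum.cong) auto
    finally show ?thesis unfolding F_def U_def V_def by simp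
  qed
  have Gh: "(\<lambda>\<omega>. Ghat n p Z eps \<phi> l l' \<omega>) = (\<lambda>\<omega>. (1 / real n) * (\<Sum>i=1..n. (\<lambda>x. F l x * F l' x) (V i \<omega>)))" for l l'
    unfolding Ghat_def yt by simp
  have Fm: "F l \<in> borel_measurable S" for l
    unfolding F_def U_def S_def by measurable
  have Z0m: "Z0 \<in> measurable M (\<Pi>\<^sub>M t\<in>(UNIV::real set). (borel::real measure))"
  proof -
    have "(\<lambda>\<omega>. \<lambda>t. Z0 \<omega> t) \<in> measurable M (\<Pi>\<^sub>M t\<in>(UNIV::real set). (borel::real measure))"
      by (rule measurable_PiM_single') (use Z0_meas in auto)
    then show ?thesis by simp
  qed
  have PA0: "prob_space A0" unfolding A0_def by (rule prob_space_distr[OF Z0m])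
  have PG: "prob_space Gm" unfolding Gm_def by (rule gauss_coord(1)[OF sigma])
  have Um: "U l \<in> borel_measurable (\<Pi>\<^sub>M t\<in>(UNIV::real set). (borel::real measure))" for l
    unfolding U_def by measurable
  have UmA: "U l \<in> borel_measurable A0" for l
    unfolding A0_def using Um by simp
  have A0int: "integrable A0 h \<longleftrightarrow> integrable M (\<lambda>\<omega>. h (Z0 \<omega>))"
    if "h \<in> borel_measurable (\<Pi>\<^sub>M t\<in>(UNIV::real set). (borel::real measure))" for h :: "(real \<Rightarrow> real) \<Rightarrow> real"
    unfolding A0_def by (rule integrable_distr_eq[OF Z0m that])
  have A0val: "(\<integral>f. h f \<partial>A0) = (\<integral>\<omega>. h (Z0 \<omega>) \<partial>M)"
    if "h \<in> borel_measurable (\<Pi>\<^sub>M t\<in>(UNIV::real set). (borel::real measure))" for h :: "(real \<Rightarrow> real) \<Rightarrow> real"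
    unfolding A0_def by (rule integral_distr[OF Z0m that])
  have U4: "integrable A0 (\<lambda>f. U l f ^ 4)" for l
    using A0int[of "\<lambda>f. U l f ^ 4"] Um[of l] moment4[of "a l"] unfolding U_def by simp
  have U0: "(\<integral>f. U l f \<partial>A0) = 0" for l
  proof -
    have "(\<integral>f. U l f \<partial>A0) = (\<integral>\<omega>. (\<Sum>h<p. a l h * Z0 \<omega> (grid p h)) \<partial>M)"
      using A0val[OF Um[of l]] unfolding U_def by simp
    also have "\<dots> = (\<Sum>h<p. a l h * (\<integral>\<omega>. Z0 \<omega> (grid p h) \<partial>M))"
      using Z0_centered grid01 by (subst Bochner_Integration.integral_sum) auto
    also have "\<dots> = 0" using Z0_centered grid01 by simp
    finally show ?thesis .
  qed
  have Ub: "(\<integral>f. U l f ^ 4 \<partial>A0) \<le> C1 * (\<integral>f. (U l f)\<^sup>2 \<partial>A0)\<^sup>2" for l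
    using A0val[of "\<lambda>f. U l f ^ 4"] A0val[of "\<lambda>f. (U l f)\<^sup>2"] Um[of l] moment4[of "a l"] unfolding U_def by simp
  have sig_eq: "sigma2 \<sigma> p \<phi> l = \<sigma>\<^sup>2 * (\<Sum>h<p. (a l h)\<^sup>2)" for l
    unfolding sigma2_def a_def by (simp add: power_divide sum_divide_distrib[symmetric])
  have ZZ: "integrable M (\<lambda>\<omega>. Z0 \<omega> s * Z0 \<omega> t)" if "s \<in> {0..1}" "t \<in> {0..1}" for s t
    by (rule cs_int(1)) (use Z0_meas Z0_sq that in auto)
  have s_eq: "s2 M Z0 p \<phi> l = (\<integral>f. (U l f)\<^sup>2 \<partial>A0)" for l
  proof -
    have "(\<integral>f. (U l f)\<^sup>2 \<partial>A0) = (\<integral>\<omega>. (\<Sum>h<p. \<Sum>h'<p. a l h * a l h' * (Z0 \<omega> (grid p h) * Z0 \<omega> (grid p h'))) \<partial>M)"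
      using A0val[of "\<lambda>f. (U l f)\<^sup>2"] Um[of l] unfolding U_def
      by (simp add: power2_eq_square sum_product algebra_simps)
    also have "\<dots> = (\<Sum>h<p. \<Sum>h'<p. a l h * a l h' * covK M Z0 (grid p h) (grid p h'))"
      unfolding covK_def using ZZ grid01
      by (subst Bochner_Integration.integral_sum, force, intro sum.cong refl,
          subst Bochner_Integration.integral_sum, force, intro sum.cong refl) simp
    also have "\<dots> = s2 M Z0 p \<phi> l"
      unfolding s2_def a_def by (simp add: sum_distrib_left power2_eq_square algebra_simps)
    finally show ?thesis ..
  qed
  define c where "c l = sigma2 \<sigma> p \<phi> l + s2 M Z0 p \<phi> l" for l
  have c0: "c l \<ge> 0" for l unfolding c_def sig_eq s_eq by (simp add: sum_nonneg)
  have F4: "integrable N (\<lambda>x. F l x ^ 4)" and F4b: "(\<integral>x. F l x ^ 4 \<partial>N) \<le> K * (c l)\<^sup>2" for l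
  proof -
    note fm = fourth_moment[OF PA0 sigma C1 UmA[of l] U4[of l] U0[of l] Ub[of l], of p "a l"]
    show "integrable N (\<lambda>x. F l x ^ 4)"
      using fm(1) unfolding N_def F_def Gm_def .
    show "(\<integral>x. F l x ^ 4 \<partial>N) \<le> K * (c l)\<^sup>2"
      using fm(2) unfolding N_def F_def Gm_def K_def c_def sig_eq s_eq .
  qed
  have g2: "integrable N (\<lambda>x. (F l x * F l' x)\<^sup>2)"
    and g2b: "(\<integral>x. (F l x * F l' x)\<^sup>2 \<partial>N) \<le> K * c l * c l'" for l l'
  proof -
    have sN: "sets N = sets S" unfolding N_def S_def A0_def Gm_def
      by (intro sets_pair_measure_cong sets_PiM_cong) auto
    have FmN: "F k \<in> borel_measurable N" for k
      using Fm[of k] measurable_cong_sets[OF sN refl, of borel] by metis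
    have sq4: "(\<lambda>x. ((F k x)\<^sup>2)\<^sup>2) = (\<lambda>x. F k x ^ 4)" for k by (simp add: power_mult[symmetric])
    have i4: "integrable N (\<lambda>x. ((F k x)\<^sup>2)\<^sup>2)" for k unfolding sq4 by (rule F4)
    note cs = cs_int[of "\<lambda>x. (F l x)\<^sup>2" N "\<lambda>x. (F l' x)\<^sup>2", OF _ _ i4 i4]
    have eq: "(\<lambda>x. (F l x * F l' x)\<^sup>2) = (\<lambda>x. (F l x)\<^sup>2 * (F l' x)\<^sup>2)" by (simp add: power_mult_distrib)
    show "integrable N (\<lambda>x. (F l x * F l' x)\<^sup>2)" unfolding eq using cs(1) FmN by simp
    have "(\<integral>x. (F l x * F l' x)\<^sup>2 \<partial>N)\<^sup>2 \<le> (\<integral>x. F l x ^ 4 \<partial>N) * (\<integral>x. F l' x ^ 4 \<partial>N)"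
      using cs(2) FmN unfolding eq sq4 by simp
    also have "\<dots> \<le> (K * (c l)\<^sup>2) * (K * (c l')\<^sup>2)"
      by (intro mult_mono F4b) (auto simp: zero_le_even_power K_def)
    also have "\<dots> = (K * c l * c l')\<^sup>2" by (simp add: power2_eq_square)
    finally show "(\<integral>x. (F l x * F l' x)\<^sup>2 \<partial>N) \<le> K * c l * c l'"
      by (rule power2_le_imp_le) (use c0 in \<open>auto simp: K_def\<close>)
  qed
  have each: "integrable M (\<lambda>\<omega>. (Ghat n p Z eps \<phi> l l' \<omega> - (\<integral>\<omega>'. Ghat n p Z eps \<phi> l l' \<omega>' \<partial>M))\<^sup>2)"
    and eachb: "(\<integral>\<omega>. (Ghat n p Z eps \<phi> l l' \<omega> - (\<integral>\<omega>'. Ghat n p Z eps \<phi> l l' \<omega>' \<partial>M))\<^sup>2 \<partial>M)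
        \<le> (1 / real n) * (K * c l * c l')" for l l'
  proof -
    have gm: "(\<lambda>x. F l x * F l' x) \<in> borel_measurable S" using Fm by measurable
    note ev = emp_var[OF M n Vm indV lawN gm g2[of l l']]
    show "integrable M (\<lambda>\<omega>. (Ghat n p Z eps \<phi> l l' \<omega> - (\<integral>\<omega>'. Ghat n p Z eps \<phi> l l' \<omega>' \<partial>M))\<^sup>2)"
      using ev(1) unfolding Gh[of l l'] by simp
    have "(\<integral>\<omega>. (Ghat n p Z eps \<phi> l l' \<omega> - (\<integral>\<omega>'. Ghat n p Z eps \<phi> l l' \<omega>' \<partial>M))\<^sup>2 \<partial>M)
        \<le> (1 / real n) * (\<integral>x. (F l x * F l' x)\<^sup>2 \<partial>N)"
      using ev(2) unfolding Gh[of l l'] by simp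
    also have "\<dots> \<le> (1 / real n) * (K * c l * c l')"
      by (intro mult_left_mono g2b) auto
    finally show "(\<integral>\<omega>. (Ghat n p Z eps \<phi> l l' \<omega> - (\<integral>\<omega>'. Ghat n p Z eps \<phi> l l' \<omega>' \<partial>M))\<^sup>2 \<partial>M)
        \<le> (1 / real n) * (K * c l * c l')" .
  qed
  have "(\<integral>\<omega>. (\<Sum>l\<in>\<Lambda>. \<Sum>l'\<in>\<Lambda>. (Ghat n p Z eps \<phi> l l' \<omega> - (\<integral>\<omega>'. Ghat n p Z eps \<phi> l l' \<omega>' \<partial>M))\<^sup>2) \<partial>M)
      = (\<Sum>l\<in>\<Lambda>. \<Sum>l'\<in>\<Lambda>. \<integral>\<omega>. (Ghat n p Z eps \<phi> l l' \<omega> - (\<integral>\<omega>'. Ghat n p Z eps \<phi> l l' \<omega>' \<partial>M))\<^sup>2 \<partial>M)"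
    by (subst Bochner_Integration.integral_sum)
       (auto intro!: Bochner_Integration.integrable_sum each sum.cong Bochner_Integration.integral_sum)
  also have "\<dots> \<le> (\<Sum>l\<in>\<Lambda>. \<Sum>l'\<in>\<Lambda>. (1 / real n) * (K * c l * c l'))"
    by (intro sum_mono eachb)
  also have "\<dots> = K / real n * (\<Sum>l\<in>\<Lambda>. c l)\<^sup>2"
    by (simp add: power2_eq_square sum_product sum_distrib_left algebra_simps)
  finally show ?thesis unfolding K_def c_def .
qed

end
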